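(* Let $r>1$ be an integer and let $\sigma$ be a morphism on the alphabet $\{0,\dots,r-1\}$ which is non-erasing, i.e. $|\sigma(i)|\ge 1$ for all $i\in\{0,\dots,r-1\}$. Let $L=(|\sigma(0)|,\dots,|\sigma(r-1)|)$ be its length vector and $M$ its incidence matrix. Let $x$ be a one-sided infinite fixed point of $\sigma$. If $L$ is a left eigenvector of $M$ (i.e. $LM=\lambda L$ for some real $\lambda$), then $x$ is $q$-automatic, where $q$ is the spectral radius of $M$ (in particular $q$ is an integer).
   Context: A morphism $\sigma$ on a finite alphabet $\mathcal A$ extends to finite and infinite words by concatenation. Its incidence matrix $M$ is the $|\mathcal A|\times|\mathcal A|$ matrix with $M_{i,j}$ equal to the number of occurrences of the letter $i$ in $\sigma(j)$ (so column sums are the lengths $|\sigma(j)|$). A morphism is $q$-uniform if all images of letters have length $q$. For an integer $q\ge 2$, a sequence is $q$-automatic if it is the image under a letter-to-letter map of a fixed point of a $q$-uniform morphism. *)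

theory Defs
  imports Main "Jordan_Normal_Form.Spectral_Radius"
begin

definition is_morphism :: "nat \<Rightarrow> (nat \<Rightarrow> nat list) \<Rightarrow> bool" where
  "is_morphism r \<sigma> \<longleftrightarrow> (\<forall>a<r. set (\<sigma> a) \<subseteq> {..<r})"

definition non_erasing :: "nat \<Rightarrow> (nat \<Rightarrow> nat list) \<Rightarrow> bool" where
  "non_erasing r \<sigma> \<longleftrightarrow> (\<forall>a<r. length (\<sigma> a) \<ge> 1)"

definition incidence_mat :: "nat \<Rightarrow> (nat \<Rightarrow> nat list) \<Rightarrow> complex mat" where
  "incidence_mat r \<sigma> = mat r r (\<lambda>(i,j). of_nat (count_list (\<sigma> j) i))"

definition length_vec :: "nat \<Rightarrow> (nat \<Rightarrow> nat list) \<Rightarrow> complex vec" where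
  "length_vec r \<sigma> = vec r (\<lambda>j. of_nat (length (\<sigma> j)))"

(* L is a left eigenvector of M with a real eigenvalue: L M = lambda L *)
definition left_eigvec_real :: "complex vec \<Rightarrow> complex mat \<Rightarrow> bool" where
  "left_eigvec_real L M \<longleftrightarrow> (\<exists>c::real. transpose_mat M *\<^sub>v L = complex_of_real c \<cdot>\<^sub>v L)"

(* sigma(x) = x for an infinite word x :: nat => nat (sigma extended by concatenation):
   for every n, sigma(x_0 ... x_{n-1}) is a prefix of x. *)
definition is_fixed_point :: "(nat \<Rightarrow> nat list) \<Rightarrow> (nat \<Rightarrow> nat) \<Rightarrow> bool" where
  "is_fixed_point \<sigma> x \<longleftrightarrow>
     (\<forall>n. let w = concat (map \<sigma> (map x [0..<n])) in \<forall>k<length w. w ! k = x k)"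

(* one-sided infinite fixed point of sigma in the usual sense x = sigma^omega(a):
   sigma(x) = x, with x over the alphabet, and sigma(x_0) = x_0 u with u nonempty *)
definition infinite_fixed_point :: "nat \<Rightarrow> (nat \<Rightarrow> nat list) \<Rightarrow> (nat \<Rightarrow> nat) \<Rightarrow> bool" where
  "infinite_fixed_point r \<sigma> x \<longleftrightarrow>
     (\<forall>n. x n < r) \<and> is_fixed_point \<sigma> x \<and> length (\<sigma> (x 0)) \<ge> 2"

definition uniform :: "nat \<Rightarrow> nat \<Rightarrow> (nat \<Rightarrow> nat list) \<Rightarrow> bool" where
  "uniform s q \<tau> \<longleftrightarrow> (\<forall>a<s. length (\<tau> a) = q)"

(* q-automatic: image under a letter-to-letter map of a fixed point of a q-uniform
   morphism on a finite alphabet {0,...,s-1} *)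
definition automatic :: "nat \<Rightarrow> (nat \<Rightarrow> 'b) \<Rightarrow> bool" where
  "automatic q x \<longleftrightarrow> q \<ge> 2 \<and>
     (\<exists>s \<tau> y f. is_morphism s \<tau> \<and> uniform s q \<tau> \<and> (\<forall>n. y n < s) \<and>
        is_fixed_point \<tau> y \<and> (\<forall>n. x n = f (y n)))"

end

theory Submission
  imports Defs
begin


definition img :: "(nat \<Rightarrow> nat list) \<Rightarrow> nat list \<Rightarrow> nat list" where
  "img \<sigma> w = concat (map \<sigma> w)"

lemma img_simps[simp]: "img \<sigma> [] = []" "img \<sigma> (a#w) = \<sigma> a @ img \<sigma> w"
  "img \<sigma> (u@v) = img \<sigma> u @ img \<sigma> v"
  by (auto simp: img_def)

definition ann :: "(nat \<Rightarrow> nat list) \<Rightarrow> nat \<Rightarrow> nat list \<Rightarrow> nat list" where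
  "ann \<sigma> K w = concat (map (\<lambda>a. map (\<lambda>i. a*K+i) [0..<length (\<sigma> a)]) w)"

lemma ann_simps[simp]: "ann \<sigma> K [] = []"
  "ann \<sigma> K (a#w) = map (\<lambda>i. a*K+i) [0..<length (\<sigma> a)] @ ann \<sigma> K w"
  "ann \<sigma> K (u@v) = ann \<sigma> K u @ ann \<sigma> K v"
  by (auto simp: ann_def)

lemma length_ann[simp]: "length (ann \<sigma> K w) = length (img \<sigma> w)"
  by (induction w) auto

lemma map_ann: assumes "\<forall>a\<in>set w. length (\<sigma> a) \<le> K"
  shows "map (\<lambda>c. \<sigma> (c div K) ! (c mod K)) (ann \<sigma> K w) = img \<sigma> w"
  using assms
proof (induction w)
  case (Cons a w)
  have "map (\<lambda>c. \<sigma> (c div K) ! (c mod K)) (map (\<lambda>i. a*K+i) [0..<length (\<sigma> a)]) = \<sigma> a"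
  proof (rule nth_equalityI)
    fix i assume "i < length (map (\<lambda>c. \<sigma> (c div K) ! (c mod K)) (map (\<lambda>i. a*K+i) [0..<length (\<sigma> a)]))"
    then have i: "i < length (\<sigma> a)" by simp
    with Cons.prems have "i < K" by auto
    then show "map (\<lambda>c. \<sigma> (c div K) ! (c mod K)) (map (\<lambda>i. a*K+i) [0..<length (\<sigma> a)]) ! i = \<sigma> a ! i"
      using i by simp
  qed simp
  then show ?case using Cons by simp
qed simp

lemma set_ann: assumes "set w \<subseteq> {..<r}" "\<forall>a<r. length (\<sigma> a) \<le> K"
  shows "set (ann \<sigma> K w) \<subseteq> {..<r*K}"
  using assms
proof (induction w)
  case (Cons a w)
  have "c < r*K" if "c < length (\<sigma> a) + a*K" for c
  proof -
    have a: "a < r" using Cons.prems by auto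
    have "length (\<sigma> a) \<le> K" using Cons.prems(2) a by fastforce
    then have "c < a*K + K" using that by simp
    also have "\<dots> = Suc a * K" by simp
    also have "\<dots> \<le> r*K" using a by (intro mult_le_mono1) simp
    finally show ?thesis .
  qed
  then show ?case using Cons by auto
qed simp

lemma chunks: "length Z = k*q \<Longrightarrow> concat (map (\<lambda>i. take q (drop (i*q) Z)) [0..<k]) = Z"
proof -
  have "concat (map (\<lambda>i. take q (drop (i*q) Z)) [0..<k]) = take (k*q) Z" for k
  proof (induction k)
    case (Suc k)
    have "take (Suc k * q) Z = take (k*q) Z @ take q (drop (k*q) Z)"
      using take_add[of "k*q" q Z] by (simp add: add.commute)
    then show ?case using Suc by simp
  qed simp
  then show "length Z = k*q \<Longrightarrow> ?thesis" by simp
qed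

lemma length_img: "length (img \<sigma> w) = sum_list (map (\<lambda>a. length (\<sigma> a)) w)"
  by (induction w) auto

lemma length_img_ge: "\<forall>a\<in>set w. length (\<sigma> a) \<ge> 1 \<Longrightarrow> length (img \<sigma> w) \<ge> length w"
  by (induction w) auto

lemma automaton_part:
  assumes morph: "is_morphism r \<sigma>" and ne: "non_erasing r \<sigma>" and xr: "\<forall>n. x n < r"
    and fp: "is_fixed_point \<sigma> x" and q2: "q \<ge> 2" and r0: "r > 0"
    and len: "\<forall>a<r. length (img \<sigma> (\<sigma> a)) = q * length (\<sigma> a)"
  shows "automatic q x"
proof -
  define K where "K = (\<Sum>a<r. length (\<sigma> a))"
  have lenK: "\<forall>a<r. length (\<sigma> a) \<le> K" unfolding K_def
    by (auto intro: member_le_sum)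
  have K0: "K > 0"
  proof -
    have "1 \<le> length (\<sigma> 0)" "length (\<sigma> 0) \<le> K" using lenK ne r0 unfolding non_erasing_def by auto
    then show ?thesis by linarith
  qed
  define s where "s = r*K"
  have s0: "s > 0" using K0 r0 s_def by simp
  define A where "A = ann \<sigma> K"
  define \<tau> where "\<tau> = (\<lambda>c. if c div K < r \<and> c mod K < length (\<sigma> (c div K))
      then take q (drop ((c mod K)*q) (A (\<sigma> (c div K)))) else replicate q 0)"
  define X where "X = (\<lambda>N. map x [0..<N])"
  define y where "y = (\<lambda>p. A (X (Suc p)) ! p)"
  define f where "f = (\<lambda>c. \<sigma> (c div K) ! (c mod K))"
  have Xr: "set (X N) \<subseteq> {..<r}" for N using xr X_def by auto
  have sig_r: "a < r \<Longrightarrow> set (\<sigma> a) \<subseteq> {..<r}" for a using morph by (simp add: is_morphism_def)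
  have img_r: "set w \<subseteq> {..<r} \<Longrightarrow> set (img \<sigma> w) \<subseteq> {..<r}" for w
    using sig_r by (induction w) auto
  have imgX: "img \<sigma> (X N) = X (length (img \<sigma> (X N)))" for N
  proof (rule nth_equalityI)
    show "length (img \<sigma> (X N)) = length (X (length (img \<sigma> (X N))))" by (simp add: X_def)
    fix k assume "k < length (img \<sigma> (X N))"
    then show "img \<sigma> (X N) ! k = X (length (img \<sigma> (X N))) ! k"
      using fp unfolding is_fixed_point_def img_def X_def Let_def by auto
  qed
  have imgX_ge: "length (img \<sigma> (X N)) \<ge> N" for N
  proof -
    have "\<forall>a\<in>set (X N). length (\<sigma> a) \<ge> 1" using Xr ne unfolding non_erasing_def by auto
    from length_img_ge[OF this] show ?thesis by (simp add: X_def)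
  qed
  have Xadd: "X (N+d) = X N @ map x [N..<N+d]" for N d
    unfolding X_def upt_add_eq_append[OF le0] by simp
  have prefix: "A (X N) = map y [0..<length (A (X N))]" for N
  proof (rule nth_equalityI)
    fix p assume p: "p < length (A (X N))"
    have "A (X N) ! p = A (X (Suc p)) ! p"
    proof (cases "N \<le> Suc p")
      case True
      then obtain d where "Suc p = N + d" using le_Suc_ex by blast
      then show ?thesis using p by (simp add: Xadd A_def nth_append)
    next
      case False
      then obtain d where "N = Suc p + d" by (metis le_Suc_ex nat_le_linear)
      moreover have "p < length (A (X (Suc p)))" using imgX_ge[of "Suc p"] by (simp add: A_def)
      ultimately show ?thesis using Xadd[of "Suc p" d] by (simp add: A_def nth_append del: upt_Suc)
    qed
    then show "A (X N) ! p = map y [0..<length (A (X N))] ! p" using p by (simp add: y_def)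
  qed simp
  have ann_r: "set (A w) \<subseteq> {..<s}" if "set w \<subseteq> {..<r}" for w
    using set_ann[OF that lenK] by (simp add: A_def s_def)
  have tau_ann: "concat (map \<tau> (A w)) = A (img \<sigma> w)" if "set w \<subseteq> {..<r}" for w
    using that
  proof (induction w)
    case (Cons a w)
    have a: "a < r" using Cons.prems by auto
    have m: "map \<tau> (map (\<lambda>i. a*K+i) [0..<length (\<sigma> a)]) =
       map (\<lambda>i. take q (drop (i*q) (A (\<sigma> a)))) [0..<length (\<sigma> a)]"
      unfolding map_map
    proof (rule map_cong[OF refl])
      fix i assume "i \<in> set [0..<length (\<sigma> a)]"
      then have i: "i < length (\<sigma> a)" by auto
      have "i < K" using i lenK a by fastforce
      then have "(a*K+i) div K = a" "(a*K+i) mod K = i" by auto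
      then show "(\<tau> \<circ> (\<lambda>i. a*K+i)) i = take q (drop (i*q) (A (\<sigma> a)))" using a i
        by (simp add: \<tau>_def)
    qed
    have lA: "length (A (\<sigma> a)) = length (\<sigma> a) * q" using len a by (simp add: A_def)
    have "concat (map \<tau> (map (\<lambda>i. a*K+i) [0..<length (\<sigma> a)])) = 
       concat (map (\<lambda>i. take q (drop (i*q) (A (\<sigma> a)))) [0..<length (\<sigma> a)])" 
      by (simp only: m)
    also have "\<dots> = A (\<sigma> a)" by (rule chunks[OF lA])
    finally have "concat (map \<tau> (map (\<lambda>i. a*K+i) [0..<length (\<sigma> a)])) = A (\<sigma> a)" .
    then show ?case using Cons by (simp add: A_def)
  qed (simp add: A_def)
  have morph\<tau>: "is_morphism s \<tau>"
    unfolding is_morphism_def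
  proof (intro allI impI)
    fix c assume "c < s"
    show "set (\<tau> c) \<subseteq> {..<s}"
    proof (cases "c div K < r \<and> c mod K < length (\<sigma> (c div K))")
      case True
      have "set (A (\<sigma> (c div K))) \<subseteq> {..<s}" using ann_r sig_r True by blast
      then show ?thesis using True unfolding \<tau>_def
        by (auto dest: in_set_takeD in_set_dropD)
    qed (use s0 in \<open>auto simp: \<tau>_def\<close>)
  qed
  have unif: "uniform s q \<tau>"
    unfolding uniform_def
  proof (intro allI impI)
    fix c assume "c < s"
    show "length (\<tau> c) = q"
    proof (cases "c div K < r \<and> c mod K < length (\<sigma> (c div K))")
      case True
      then have "Suc (c mod K) \<le> length (\<sigma> (c div K))" by simp
      then have "q * Suc (c mod K) \<le> q * length (\<sigma> (c div K))" by (rule mult_le_mono2)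
      moreover have "length (A (\<sigma> (c div K))) = q * length (\<sigma> (c div K))"
        using len True by (simp add: A_def)
      ultimately show ?thesis using True unfolding \<tau>_def by (simp add: algebra_simps)
    next
      case False then show ?thesis by (auto simp: \<tau>_def)
    qed
  qed
  have ys: "y n < s" for n
  proof -
    have "n < length (A (X (Suc n)))" using imgX_ge[of "Suc n"] by (simp add: A_def)
    then show ?thesis using ann_r[OF Xr[of "Suc n"]] unfolding y_def by (meson lessThan_iff nth_mem subsetD)
  qed
  have xf: "x n = f (y n)" for n
  proof -
    have n: "n < length (A (X (Suc n)))" using imgX_ge[of "Suc n"] by (simp add: A_def)
    have "\<forall>a\<in>set (X (Suc n)). length (\<sigma> a) \<le> K" using Xr lenK by auto
    from map_ann[OF this] have "map f (A (X (Suc n))) = img \<sigma> (X (Suc n))"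
      by (simp add: f_def A_def)
    then have "f (y n) = img \<sigma> (X (Suc n)) ! n" using n by (metis nth_map y_def)
    also have "\<dots> = X (length (img \<sigma> (X (Suc n)))) ! n" using imgX by metis
    also have "\<dots> = x n" using imgX_ge[of "Suc n"] by (simp add: X_def)
    finally show ?thesis by simp
  qed
  have fpy: "is_fixed_point \<tau> y"
    unfolding is_fixed_point_def Let_def
  proof (intro allI impI)
    fix n k
    define Yn where "Yn = map y [0..<n]"
    assume k: "k < length (concat (map \<tau> Yn))"
    have Ln: "n \<le> length (A (X n))" using imgX_ge[of n] by (simp add: A_def)
    have Yn: "Yn = take n (A (X n))"
      using prefix[of n] Ln by (metis Yn_def take_map take_upt add_0 le_add_diff_inverse)
    define L' where "L' = length (A (X (length (img \<sigma> (X n)))))"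
    have "concat (map \<tau> (A (X n))) = A (img \<sigma> (X n))" using tau_ann Xr by blast
    also have "\<dots> = map y [0..<L']" using imgX prefix L'_def by metis
    finally have eq: "concat (map \<tau> Yn) @ concat (map \<tau> (drop n (A (X n)))) = map y [0..<L']"
      using Yn by (metis append_take_drop_id concat_append map_append)
    then have "k < L'" using k by (metis length_append length_map length_upt minus_nat.diff_0 trans_less_add1)
    have "concat (map \<tau> Yn) ! k = (concat (map \<tau> Yn) @ concat (map \<tau> (drop n (A (X n))))) ! k"
      using k by (simp add: nth_append)
    also have "\<dots> = map y [0..<L'] ! k" using eq by simp
    also have "\<dots> = y k" using \<open>k < L'\<close> by simp
    finally show "concat (map \<tau> Yn) ! k = y k" .
  qed
  show ?thesis unfolding automatic_def
    using q2 morph\<tau> unif ys fpy xf by blast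
qed



lemma sum_count: "set (w::nat list) \<subseteq> {0..<r} \<Longrightarrow> (\<Sum>i\<in>{0..<r}. count_list w i * g i) = sum_list (map g w)"
proof (induction w)
  case (Cons a w)
  have "(\<Sum>i\<in>{0..<r}. count_list (a#w) i * g i) =
        (\<Sum>i\<in>{0..<r}. (if a = i then g i else 0)) + (\<Sum>i\<in>{0..<r}. count_list w i * g i)"
  proof -
    have "\<And>i. count_list (a#w) i * g i = (if a = i then g i else 0) + count_list w i * g i" by simp
    then show ?thesis by (simp only: sum.distrib)
  qed
  also have "(\<Sum>i\<in>{0..<r}. (if a = i then g i else 0)) = g a" using Cons.prems by simp
  finally show ?case using Cons by simp
qed simp

lemma length_img2:
  assumes "\<forall>j<r. real (length (img \<sigma> (\<sigma> j))) = c * real (length (\<sigma> j))"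
    and "set w \<subseteq> {..<r}"
  shows "real (length (img \<sigma> (img \<sigma> w))) = c * real (length (img \<sigma> w))"
  using assms(2)
proof (induction w)
  case (Cons a w)
  then show ?case using assms(1) by (simp add: algebra_simps)
qed simp

lemma length_iter:
  assumes "\<forall>j<r. real (length (img \<sigma> (\<sigma> j))) = c * real (length (\<sigma> j))"
    and "is_morphism r \<sigma>"
  shows "set w \<subseteq> {..<r} \<Longrightarrow> real (length ((img \<sigma> ^^ Suc n) w)) = c^n * real (length (img \<sigma> w))"
proof (induction n arbitrary: w)
  case (Suc n)
  have sw: "set (img \<sigma> w) \<subseteq> {..<r}" using Suc.prems assms(2) unfolding is_morphism_def img_def
    by auto
  have "(img \<sigma> ^^ Suc (Suc n)) w = (img \<sigma> ^^ Suc n) (img \<sigma> w)"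
    by (simp only: funpow_Suc_right comp_apply)
  then have "real (length ((img \<sigma> ^^ Suc (Suc n)) w)) = c^n * real (length (img \<sigma> (img \<sigma> w)))"
    using Suc.IH[OF sw] by simp
  also have "\<dots> = c^Suc n * real (length (img \<sigma> w))"
    using length_img2[OF assms(1) Suc.prems] by simp
  finally show ?case .
qed simp

lemma rat_int:
  fixes c :: real
  assumes "\<forall>n. \<exists>k::nat. c^n * real m = real k" and "m > 0" and "c \<in> \<rat>" and "c \<ge> 0"
  shows "\<exists>q::nat. c = real q"
proof -
  obtain a b :: int where b: "b > 0" and cop: "coprime a b" and c: "c = of_int a / of_int b"
    using Rats_cases'[OF assms(3)] by blast
  obtain k where k: "c^m * real m = real k" using assms(1) by blast
  have "(of_int a / of_int b)^m * real m = real k" using k c by simp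
  then have "real_of_int (a^m * int m) = real_of_int (b^m * int k)" using b
    by (simp add: field_simps power_divide)
  then have eq: "a^m * int m = b^m * int k" by (simp only: of_int_eq_iff)
  have "b^m dvd a^m * int m" by (simp add: eq)
  moreover have "coprime (b^m) (a^m)" using cop by (simp add: coprime_commute)
  ultimately have "b^m dvd int m" using coprime_dvd_mult_right_iff by blast
  then have le: "b^m \<le> int m" using assms(2) by (intro zdvd_imp_le) auto
  have b1: "b = 1"
  proof (rule ccontr)
    assume "b \<noteq> 1"
    then have "b \<ge> 2" using b by simp
    then have "(2::int)^m \<le> b^m" by (intro power_mono) auto
    moreover have "int m < 2^m" using less_exp[of m] by (metis of_nat_less_iff of_nat_numeral of_nat_power)
    ultimately show False using le by simp
  qed
  then have "c = of_int a" using c by simp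
  moreover from this have "a \<ge> 0" using assms(4) by simp
  ultimately have "c = real (nat a)" by simp
  then show ?thesis by blast
qed



theorem theorem1:
  fixes r :: nat and \<sigma> :: "nat \<Rightarrow> nat list" and x :: "nat \<Rightarrow> nat"
  assumes "r > 1"
    and "is_morphism r \<sigma>"
    and "non_erasing r \<sigma>"
    and "infinite_fixed_point r \<sigma> x"
    and "left_eigvec_real (length_vec r \<sigma>) (incidence_mat r \<sigma>)"
  shows "\<exists>q::nat. spectral_radius (incidence_mat r \<sigma>) = real q \<and> automatic q x"
proof -
  define M where "M = incidence_mat r \<sigma>"
  define L where "L = length_vec r \<sigma>"
  have r0: "r > 0" using assms(1) by simp
  have morph: "is_morphism r \<sigma>" and ne: "non_erasing r \<sigma>" using assms by auto
  have xr: "\<forall>n. x n < r" and fp: "is_fixed_point \<sigma> x" and len2: "length (\<sigma> (x 0)) \<ge> 2"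
    using assms(4) unfolding infinite_fixed_point_def by auto
  obtain c :: real where ev: "transpose_mat M *\<^sub>v L = complex_of_real c \<cdot>\<^sub>v L"
    using assms(5) unfolding left_eigvec_real_def M_def L_def by blast
  have Mc: "M \<in> carrier_mat r r" by (simp add: M_def incidence_mat_def)
  have Lc: "L \<in> carrier_vec r" by (simp add: L_def length_vec_def)
  have sig_r: "a < r \<Longrightarrow> set (\<sigma> a) \<subseteq> {0..<r}" for a using morph by (simp add: is_morphism_def atLeast0LessThan)
  have natsum: "(\<Sum>i\<in>{0..<r}. count_list (\<sigma> j) i * length (\<sigma> i)) = length (img \<sigma> (\<sigma> j))"
    if "j < r" for j
    using sum_count[OF sig_r[OF that], of "\<lambda>i. length (\<sigma> i)"] by (simp add: length_img)
  have keyc: "\<forall>j<r. real (length (img \<sigma> (\<sigma> j))) = c * real (length (\<sigma> j))"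
  proof (intro allI impI)
    fix j assume j: "j < r"
    have "(transpose_mat M *\<^sub>v L) $ j =
        (\<Sum>i\<in>{0..<r}. of_nat (count_list (\<sigma> j) i) * of_nat (length (\<sigma> i)))"
      using j by (auto simp: M_def L_def incidence_mat_def length_vec_def scalar_prod_def intro!: sum.cong)
    also have "\<dots> = of_nat (\<Sum>i\<in>{0..<r}. count_list (\<sigma> j) i * length (\<sigma> i))" by simp
    also have "\<dots> = of_nat (length (img \<sigma> (\<sigma> j)))" using natsum j by simp
    finally have 1: "(transpose_mat M *\<^sub>v L) $ j = of_nat (length (img \<sigma> (\<sigma> j)))" .
    have 2: "(transpose_mat M *\<^sub>v L) $ j = complex_of_real c * of_nat (length (\<sigma> j))"
      using j ev by (simp add: L_def length_vec_def)
    have "complex_of_real (real (length (img \<sigma> (\<sigma> j)))) = complex_of_real (c * real (length (\<sigma> j)))"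
      using 1 2 by simp
    then show "real (length (img \<sigma> (\<sigma> j))) = c * real (length (\<sigma> j))"
      by (simp only: of_real_eq_iff)
  qed
  define m0 where "m0 = length (\<sigma> 0)"
  have m0: "m0 > 0" using ne r0 unfolding non_erasing_def m0_def by fastforce
  have c_eq: "c = real (length (img \<sigma> (\<sigma> 0))) / real m0"
    using keyc r0 m0 unfolding m0_def by (simp add: field_simps)
  have cQ: "c \<in> \<rat>" unfolding c_eq by simp
  have c0: "c \<ge> 0" unfolding c_eq by simp
  have iter: "\<forall>n. \<exists>k::nat. c^n * real m0 = real k"
  proof
    fix n
    have "set [0::nat] \<subseteq> {..<r}" using r0 by simp
    from length_iter[OF keyc morph this, of n] show "\<exists>k::nat. c^n * real m0 = real k"
      by (metis m0_def img_simps(1,2) append_Nil2)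
  qed
  obtain q :: nat where cq: "c = real q" using rat_int[OF iter m0 cQ c0] by blast
  have lenq: "\<forall>a<r. length (img \<sigma> (\<sigma> a)) = q * length (\<sigma> a)"
  proof (intro allI impI)
    fix a assume "a < r"
    then have "real (length (img \<sigma> (\<sigma> a))) = real (q * length (\<sigma> a))" using keyc cq by simp
    then show "length (img \<sigma> (\<sigma> a)) = q * length (\<sigma> a)" by (simp only: of_nat_eq_iff)
  qed
  have q2: "q \<ge> 2"
  proof -
    define u where "u = \<sigma> (x 0)"
    have "\<forall>k<length (\<sigma> (x 0)). \<sigma> (x 0) ! k = x k"
      using spec[OF fp[unfolded is_fixed_point_def], of 1] by (simp add: Let_def)
    moreover have "0 < length (\<sigma> (x 0))" using len2 by linarith
    ultimately have u0: "u ! 0 = x 0" unfolding u_def by blast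
    have uC: "u = x 0 # tl u" using u0 len2 unfolding u_def
      by (metis hd_Cons_tl hd_conv_nth list.size(3) not_numeral_le_zero)
    have tlr: "\<forall>a\<in>set (tl u). length (\<sigma> a) \<ge> 1"
      using sig_r[of "x 0"] xr ne unfolding u_def non_erasing_def
      by (metis atLeastLessThan_iff list.set_sel(2) list.size(3) not_numeral_le_zero subsetD len2)
    have "length (img \<sigma> u) = length (\<sigma> (x 0)) + length (img \<sigma> (tl u))"
      using uC by (metis img_simps(2) length_append)
    also have "\<dots> \<ge> length u + length (tl u)" using length_img_ge[OF tlr] u_def by simp
    finally have "length (img \<sigma> u) > length u" using len2 length_tl[of "\<sigma> (x 0)"] unfolding u_def by linarith
    then have "q * length u > length u" using lenq xr u_def by simp
    then show ?thesis
      by (metis One_nat_def less_2_cases_iff mult_1 mult_0 not_less_zero not_less nat_less_le)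
  qed
  have aut: "automatic q x"
    by (rule automaton_part[OF morph ne xr fp q2 r0 lenq])
  have Lnz: "L \<noteq> 0\<^sub>v r"
  proof
    assume "L = 0\<^sub>v r"
    then have "L $ 0 = 0" using r0 by simp
    then show False using m0 r0 by (simp add: L_def length_vec_def m0_def)
  qed
  have "eigenvector (transpose_mat M) L (of_nat q)"
    unfolding eigenvector_def using Lc Lnz ev cq Mc by simp
  then have "of_nat q \<in> spectrum (transpose_mat M)" unfolding spectrum_def eigenvalue_def by blast
  then have qspec: "of_nat q \<in> spectrum M"
    using spectrum_root_char_poly[OF Mc] spectrum_root_char_poly[of "transpose_mat M" r] Mc by simp
  have bound: "norm e \<le> real q" if eS: "e \<in> spectrum M" for e
  proof -
    obtain v where v: "eigenvector M v e" using eS unfolding spectrum_def eigenvalue_def by blast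
    have vc: "v \<in> carrier_vec r" and vnz: "v \<noteq> 0\<^sub>v r" and Mv: "M *\<^sub>v v = e \<cdot>\<^sub>v v"
      using v Mc unfolding eigenvector_def by auto
    have row: "e * v $ i = (\<Sum>j\<in>{0..<r}. of_nat (count_list (\<sigma> j) i) * v $ j)" if i: "i < r" for i
    proof -
      have "(M *\<^sub>v v) $ i = (e \<cdot>\<^sub>v v) $ i" using Mv by simp
      then show ?thesis using i vc
        by (auto simp: M_def incidence_mat_def scalar_prod_def intro!: sum.cong)
    qed
    have rowb: "norm e * norm (v $ i) \<le> (\<Sum>j\<in>{0..<r}. real (count_list (\<sigma> j) i) * norm (v $ j))"
      if i: "i < r" for i
    proof -
      have "norm e * norm (v $ i) = norm (\<Sum>j\<in>{0..<r}. of_nat (count_list (\<sigma> j) i) * v $ j)"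
        using row[OF i] by (metis norm_mult)
      also have "\<dots> \<le> (\<Sum>j\<in>{0..<r}. norm (of_nat (count_list (\<sigma> j) i) * v $ j))"
        by (rule norm_sum)
      also have "\<dots> = (\<Sum>j\<in>{0..<r}. real (count_list (\<sigma> j) i) * norm (v $ j))"
        by (simp add: norm_mult)
      finally show ?thesis .
    qed
    define T where "T = (\<Sum>i\<in>{0..<r}. real (length (\<sigma> i)) * norm (v $ i))"
    have "norm e * T = (\<Sum>i\<in>{0..<r}. real (length (\<sigma> i)) * (norm e * norm (v $ i)))"
      unfolding T_def by (simp add: sum_distrib_left algebra_simps)
    also have "\<dots> \<le> (\<Sum>i\<in>{0..<r}. real (length (\<sigma> i)) *
                 (\<Sum>j\<in>{0..<r}. real (count_list (\<sigma> j) i) * norm (v $ j)))"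
      by (intro sum_mono mult_left_mono rowb) auto
    also have "\<dots> = (\<Sum>j\<in>{0..<r}. norm (v $ j) *
                 (\<Sum>i\<in>{0..<r}. real (count_list (\<sigma> j) i * length (\<sigma> i))))"
    proof -
      have "(\<Sum>i\<in>{0..<r}. real (length (\<sigma> i)) *
                 (\<Sum>j\<in>{0..<r}. real (count_list (\<sigma> j) i) * norm (v $ j))) =
            (\<Sum>i\<in>{0..<r}. \<Sum>j\<in>{0..<r}. norm (v $ j) * real (count_list (\<sigma> j) i * length (\<sigma> i)))"
        by (simp add: sum_distrib_left mult_ac)
      also have "\<dots> = (\<Sum>j\<in>{0..<r}. \<Sum>i\<in>{0..<r}. norm (v $ j) * real (count_list (\<sigma> j) i * length (\<sigma> i)))"
        by (rule sum.swap)
      also have "\<dots> = (\<Sum>j\<in>{0..<r}. norm (v $ j) *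
                 (\<Sum>i\<in>{0..<r}. real (count_list (\<sigma> j) i * length (\<sigma> i))))"
        by (simp only: sum_distrib_left)
      finally show ?thesis .
    qed
    also have "\<dots> = (\<Sum>j\<in>{0..<r}. norm (v $ j) * (real q * real (length (\<sigma> j))))"
    proof (rule sum.cong[OF refl])
      fix j assume "j \<in> {0..<r}"
      then have j: "j < r" by simp
      have "(\<Sum>i\<in>{0..<r}. real (count_list (\<sigma> j) i * length (\<sigma> i))) =
            real (\<Sum>i\<in>{0..<r}. count_list (\<sigma> j) i * length (\<sigma> i))" by (simp only: of_nat_sum)
      also have "\<dots> = real (q * length (\<sigma> j))" using natsum[OF j] lenq j by simp
      finally show "norm (v $ j) * (\<Sum>i\<in>{0..<r}. real (count_list (\<sigma> j) i * length (\<sigma> i))) =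
            norm (v $ j) * (real q * real (length (\<sigma> j)))" by simp
    qed
    also have "\<dots> = real q * T" unfolding T_def by (simp add: sum_distrib_left algebra_simps)
    finally have le: "norm e * T \<le> real q * T" .
    obtain i where i: "i < r" "v $ i \<noteq> 0"
    proof (rule ccontr)
      assume "\<not> thesis"
      then have "\<forall>i<r. v $ i = 0" using that by blast
      then have "v = 0\<^sub>v r" using vc by (intro eq_vecI) auto
      then show False using vnz by simp
    qed
    have li: "length (\<sigma> i) \<ge> 1" using ne i unfolding non_erasing_def by auto
    have "0 < real (length (\<sigma> i)) * norm (v $ i)" using li i by (intro mult_pos_pos) auto
    also have "\<dots> \<le> T" unfolding T_def
      by (rule member_le_sum) (use i in auto)
    finally have T0: "T > 0" .
    show ?thesis using le T0 by (simp add: mult_le_cancel_right)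
  qed
  have sr: "spectral_radius M = real q"
  proof -
    have "spectral_radius M \<in> norm ` spectrum M" by (rule spectral_radius_mem_max(1)[OF Mc r0])
    then have "spectral_radius M \<le> real q" using bound by auto
    moreover have "real q \<in> norm ` spectrum M"
      by (rule rev_image_eqI[OF qspec]) simp
    then have "real q \<le> spectral_radius M"
      by (rule spectral_radius_mem_max(2)[OF Mc r0])
    ultimately show ?thesis by simp
  qed
  show ?thesis using sr aut unfolding M_def by blast
qed


end
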